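(* Let $k\ge 1$ be an integer, let $(x_{i+1/2})_{i\in\mathbb{Z}}$ be an arbitrary mesh and let $(\bar v_i)_{i\in\mathbb{Z}}$ be an arbitrary real sequence. Let $v^\pm_{i+1/2}$ be the cell interface values of the $k$th order ENO reconstruction of $(\bar v_i)$. Then for every $i\in\mathbb{Z}$: if $\bar v_{i+1}-\bar v_i>0$ then $v^+_{i+1/2}-v^-_{i+1/2}\ge 0$; if $\bar v_{i+1}-\bar v_i<0$ then $v^+_{i+1/2}-v^-_{i+1/2}\le 0$; and if $\bar v_{i+1}-\bar v_i=0$ then $v^+_{i+1/2}-v^-_{i+1/2}=0$.
   Context: Mesh: a strictly increasing sequence $(x_{i+1/2})_{i\in\mathbb{Z}}$ of reals with $x_{i+1/2}\to\pm\infty$ as $i\to\pm\infty$; cells $I_i=[x_{i-1/2},x_{i+1/2})$ with lengths $\Delta x_i=x_{i+1/2}-x_{i-1/2}$. Given a real sequence $(\bar v_i)_{i\in\mathbb{Z}}$ (interpreted as cell averages), the divided differences are defined by $[\bar v_i]=\bar v_i$ and, for $i<j$, $[\bar v_i,\dots,\bar v_j]=\frac{[\bar v_{i+1},\dots,\bar v_j]-[\bar v_i,\dots,\bar v_{j-1}]}{x_{j+1/2}-x_{i-1/2}}$. The $k$th order ENO reconstruction: for each $i$, set $s_i^1=i$, and for $\ell=1,\dots,k-1$ set $s_i^{\ell+1}=s_i^\ell-1$ if $\bigl|[\bar v_{s_i^\ell-1},\dots,\bar v_{s_i^\ell+\ell-1}]\bigr|<\bigl|[\bar v_{s_i^\ell},\dots,\bar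 v_{s_i^\ell+\ell}]\bigr|$, and $s_i^{\ell+1}=s_i^\ell$ otherwise; put $s_i=s_i^k\in\{i-k+1,\dots,i\}$. Then $p_i$ is the unique polynomial of degree at most $k-1$ with $\frac{1}{\Delta x_j}\int_{I_j}p_i(x)\,dx=\bar v_j$ for $j=s_i,\dots,s_i+k-1$. The cell interface values are $v^-_{i+1/2}=p_i(x_{i+1/2})$ and $v^+_{i+1/2}=p_{i+1}(x_{i+1/2})$. *)

theory Defs
  imports "HOL-Analysis.Analysis" "HOL-Computational_Algebra.Polynomial"
begin

text \<open>Mesh: xh i stands for x_{i+1/2}; so cell I_i = [xh (i-1), xh i).
  Cell averages: v i stands for bar v_i.\<close>

fun dd :: "(int \<Rightarrow> real) \<Rightarrow> (int \<Rightarrow> real) \<Rightarrow> int \<Rightarrow> nat \<Rightarrow> real" where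
  "dd xh v i 0 = v i"
| "dd xh v i (Suc m) =
     (dd xh v (i + 1) m - dd xh v i m) / (xh (i + int m + 1) - xh (i - 1))"

text \<open>eno_stencil xh v i l is s_i^{l+1}.\<close>
fun eno_stencil :: "(int \<Rightarrow> real) \<Rightarrow> (int \<Rightarrow> real) \<Rightarrow> int \<Rightarrow> nat \<Rightarrow> int" where
  "eno_stencil xh v i 0 = i"
| "eno_stencil xh v i (Suc l) =
     (let s = eno_stencil xh v i l in
      if \<bar>dd xh v (s - 1) (Suc l)\<bar> < \<bar>dd xh v s (Suc l)\<bar> then s - 1 else s)"

definition eno_poly :: "nat \<Rightarrow> (int \<Rightarrow> real) \<Rightarrow> (int \<Rightarrow> real) \<Rightarrow> int \<Rightarrow> real poly" where
  "eno_poly k xh v i =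
     (let s = eno_stencil xh v i (k - 1) in
      THE p. degree p \<le> k - 1 \<and>
        (\<forall>j \<in> {s .. s + int k - 1}.
           integral {xh (j - 1) .. xh j} (poly p) / (xh j - xh (j - 1)) = v j))"

definition eno_vminus :: "nat \<Rightarrow> (int \<Rightarrow> real) \<Rightarrow> (int \<Rightarrow> real) \<Rightarrow> int \<Rightarrow> real" where
  "eno_vminus k xh v i = poly (eno_poly k xh v i) (xh i)"

definition eno_vplus :: "nat \<Rightarrow> (int \<Rightarrow> real) \<Rightarrow> (int \<Rightarrow> real) \<Rightarrow> int \<Rightarrow> real" where
  "eno_vplus k xh v i = poly (eno_poly k xh v (i + 1)) (xh i)"

end

theory Submission
  imports Defs
begin


definition aint :: "real poly \<Rightarrow> real poly" where
  "aint p = (\<Sum>n\<le>degree p. monom (coeff p n / of_nat (Suc n)) (Suc n))"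

lemma pderiv_sum': "pderiv (sum f A) = (\<Sum>x\<in>A. pderiv (f x))"
  using higher_pderiv_sum[of 1 f A] by simp

lemma pderiv_aint: "pderiv (aint p) = p"
proof -
  have "pderiv (aint p) = (\<Sum>n\<le>degree p. monom (coeff p n) n)"
    unfolding aint_def pderiv_sum' pderiv_monom
    by (intro sum.cong) (auto simp del: of_nat_Suc)
  thus ?thesis by (simp add: poly_as_sum_of_monoms)
qed

lemma degree_aint: "degree (aint p) \<le> degree p + 1"
  unfolding aint_def
  by (rule degree_sum_le) (auto intro: order.trans[OF degree_monom_le])

lemma roots_zero:
  fixes p :: "real poly"
  assumes "finite S" "degree p < card S" "\<And>x. x \<in> S \<Longrightarrow> poly p x = 0"
  shows "p = 0"
proof (rule ccontr)
  assume "p \<noteq> 0"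
  hence "card S \<le> card {x. poly p x = 0}"
    using assms by (intro card_mono poly_roots_finite) auto
  also have "\<dots> \<le> degree p" using card_poly_roots_bound[OF \<open>p\<noteq>0\<close>] .
  finally show False using assms by simp
qed

lemma integral_poly:
  fixes a b :: real
  assumes "a \<le> b"
  shows "integral {a..b} (poly (pderiv P)) = poly P b - poly P a"
proof -
  have "((poly (pderiv P)) has_integral (poly P b - poly P a)) {a..b}"
    apply (rule fundamental_theorem_of_calculus[OF assms])
    by (metis DERIV_subset has_real_derivative_iff_has_vector_derivative poly_DERIV top_greatest)
  thus ?thesis by (rule integral_unique)
qed



fun nev :: "(int\<Rightarrow>real) \<Rightarrow> (int\<Rightarrow>real) \<Rightarrow> int \<Rightarrow> nat \<Rightarrow> real poly" where
  "nev xh V b 0 = [:V b:]"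
| "nev xh V b (Suc m) = smult (1/(xh(b + int m + 1) - xh b))
     ([:- xh b, 1:] * nev xh V (b+1) m - [:- xh(b + int m + 1), 1:] * nev xh V b m)"

lemma degree_nev: "degree (nev xh V b m) \<le> m"
proof (induction m arbitrary: b)
  case 0 then show ?case by simp
next
  case (Suc m)
  have "degree ([:- xh b, 1:] * nev xh V (b+1) m) \<le> Suc m"
    using degree_mult_le[of "[:- xh b, 1:]" "nev xh V (b+1) m"] Suc[of "b+1"] by simp
  moreover have "degree ([:- xh(b + int m + 1), 1:] * nev xh V b m) \<le> Suc m"
    using degree_mult_le[of "[:- xh(b + int m + 1), 1:]" "nev xh V b m"] Suc[of b] by simp
  ultimately show ?case
    by (simp add: degree_diff_le order.trans[OF degree_smult_le])
qed

lemma nev_interp: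
  assumes sm: "strict_mono xh" and j: "b \<le> j" "j \<le> b + int m"
  shows "poly (nev xh V b m) (xh j) = V j"
  using j
proof (induction m arbitrary: b j)
  case 0 then show ?case by simp
next
  case (Suc m)
  have ne: "xh (b + int m + 1) - xh b \<noteq> 0"
    using sm by (smt (verit) strict_mono_less of_nat_0_le_iff)
  consider "j = b" | "j = b + int m + 1" | "b + 1 \<le> j \<and> j \<le> b + int m" using Suc.prems by linarith
  then show ?case
  proof cases
    case 1
    then show ?thesis using Suc.IH[of b b] ne by (simp add: field_simps)
  next
    case 2
    then show ?thesis using Suc.IH[of "b+1" j] ne by (simp add: field_simps)
  next
    case 3
    then show ?thesis using Suc.IH[of "b+1" j] Suc.IH[of b j] ne by (simp add: field_simps)
  qed
qed

lemma coeff_lin_mult: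
  fixes p :: "real poly"
  assumes "degree p \<le> n"
  shows "coeff ([:c, 1:] * p) (Suc n) = coeff p n"
  using assms by (simp add: coeff_eq_0)

lemma nev_coeff:
  assumes sm: "strict_mono xh" and V: "\<And>j. V j - V (j-1) = (xh j - xh (j-1)) * v j"
  shows "coeff (nev xh V b (Suc m)) (Suc m) = dd xh v (b+1) m"
proof (induction m arbitrary: b)
  case 0
  have ne: "xh (b + 1) - xh b \<noteq> 0" using sm strict_mono_less[OF sm, of b "b+1"] by simp
  have "V (b+1) - V b = (xh (b+1) - xh b) * v (b+1)" using V[of "b+1"] by simp
  then show ?case using ne by (simp add: field_simps)
next
  case (Suc m)
  have c1: "coeff ([:- xh b, 1:] * nev xh V (b+1) (Suc m)) (Suc (Suc m)) = dd xh v (b+1+1) m"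
    using coeff_lin_mult[OF degree_nev, of "- xh b" xh V "b+1" "Suc m"] Suc.IH[of "b+1"] by (simp del: nev.simps)
  have c2: "coeff ([:- xh(b + int (Suc m) + 1), 1:] * nev xh V b (Suc m)) (Suc (Suc m)) = dd xh v (b+1) m"
    using coeff_lin_mult[OF degree_nev, of "- xh(b + int (Suc m) + 1)" xh V b "Suc m"] Suc.IH[of b] by (simp del: nev.simps)
  have e: "xh (b + 1 + int m + 1) = xh (b + int (Suc m) + 1)" "b + 1 - 1 = b" by (simp_all add: add.assoc)
  show ?case
    apply (subst nev.simps(2))
    apply (simp only: coeff_smult coeff_diff c1 c2 dd.simps e)
    by simp
qed



definition Vp :: "(int\<Rightarrow>real) \<Rightarrow> (int\<Rightarrow>real) \<Rightarrow> int \<Rightarrow> real" where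
  "Vp xh v j = (\<Sum>l\<in>{0<..j}. (xh l - xh (l-1)) * v l) - (\<Sum>l\<in>{j<..0}. (xh l - xh (l-1)) * v l)"

lemma Vp_diff: "Vp xh v j - Vp xh v (j-1) = (xh j - xh (j-1)) * v j"
proof (cases "j \<ge> 1")
  case True
  have "{0<..j} = insert j {0<..j-1}" using True by auto
  moreover have "{j<..0} = {}" "{j-1<..0} = {}" using True by auto
  ultimately show ?thesis unfolding Vp_def by simp
next
  case False
  have "{j-1<..0} = insert j {j<..0}" using False by auto
  moreover have "{0<..j} = {}" "{0<..j-1} = {}" using False by auto
  ultimately show ?thesis unfolding Vp_def by simp
qed

lemma const_nodes:
  fixes G :: "real poly"
  assumes "\<And>j. s \<le> j \<Longrightarrow> j \<le> s + int k - 1 \<Longrightarrow> poly G (xh j) = poly G (xh (j-1))"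
  shows "n \<le> k \<Longrightarrow> poly G (xh (s - 1 + int n)) = poly G (xh (s-1))"
proof (induction n)
  case 0 then show ?case by simp
next
  case (Suc n)
  have "poly G (xh (s - 1 + int (Suc n))) = poly G (xh (s - 1 + int (Suc n) - 1))"
    using assms[of "s - 1 + int (Suc n)"] Suc.prems by simp
  also have "\<dots> = poly G (xh (s - 1 + int n))" by (simp add: algebra_simps)
  finally show ?case using Suc by simp
qed

lemma eno_char:
  assumes sm: "strict_mono xh" and k: "k \<ge> 1"
  shows "(THE p. degree p \<le> k - 1 \<and>
        (\<forall>j \<in> {s .. s + int k - 1}.
           integral {xh (j - 1) .. xh j} (poly p) / (xh j - xh (j - 1)) = v j))
    = pderiv (nev xh (Vp xh v) (s - 1) k)"
proof (rule the_equality)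
  define N where "N = nev xh (Vp xh v) (s - 1) k"
  have le: "\<And>j. xh (j-1) \<le> xh j" "\<And>j. xh j - xh (j-1) \<noteq> 0"
    using strict_mono_less[OF sm] by (smt (verit) diff_less zero_less_one)+
  have cell: "integral {xh (j - 1) .. xh j} (poly (pderiv N)) = (xh j - xh (j-1)) * v j"
    if "s \<le> j" "j \<le> s + int k - 1" for j
  proof -
    have "integral {xh (j - 1) .. xh j} (poly (pderiv N)) = poly N (xh j) - poly N (xh (j-1))"
      by (rule integral_poly[OF le(1)])
    also have "\<dots> = Vp xh v j - Vp xh v (j-1)"
      unfolding N_def using that by (simp add: nev_interp[OF sm])
    finally show ?thesis by (simp add: Vp_diff)
  qed
  show "degree (pderiv N) \<le> k - 1 \<and>
        (\<forall>j \<in> {s .. s + int k - 1}.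
           integral {xh (j - 1) .. xh j} (poly (pderiv N)) / (xh j - xh (j - 1)) = v j)"
    using cell le(2) degree_nev[of xh "Vp xh v" "s-1" k] by (auto simp: degree_pderiv N_def[symmetric])
  fix q assume q: "degree q \<le> k - 1 \<and>
        (\<forall>j \<in> {s .. s + int k - 1}.
           integral {xh (j - 1) .. xh j} (poly q) / (xh j - xh (j - 1)) = v j)"
  define G where "G = aint q - N"
  have Gc: "poly G (xh j) = poly G (xh (j-1))" if "s \<le> j" "j \<le> s + int k - 1" for j
  proof -
    have "integral {xh (j - 1) .. xh j} (poly q) / (xh j - xh (j - 1)) = v j"
      using q that by auto
    hence "integral {xh (j - 1) .. xh j} (poly q) = (xh j - xh (j-1)) * v j"
      using le(2)[of j] by (simp add: field_simps)
    hence "poly (aint q) (xh j) - poly (aint q) (xh (j-1)) = (xh j - xh (j-1)) * v j"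
      using integral_poly[OF le(1)[of j], of "aint q"] by (simp add: pderiv_aint)
    moreover have "poly N (xh j) - poly N (xh (j-1)) = (xh j - xh (j-1)) * v j"
      using cell[OF that] integral_poly[OF le(1)[of j], of N] by simp
    ultimately show ?thesis unfolding G_def by simp
  qed
  define H where "H = G - [:poly G (xh (s-1)):]"
  have "H = 0"
  proof (rule roots_zero)
    show "finite (xh ` {s-1..s-1+int k})" by simp
    have "card (xh ` {s-1..s-1+int k}) = k + 1"
    proof -
      have "inj_on xh {s-1..s-1+int k}" using strict_mono_imp_inj_on[OF sm] by blast
      hence "card (xh ` {s-1..s-1+int k}) = card {s-1..s-1+int k}" by (rule card_image)
      thus ?thesis by simp
    qed
    moreover have "degree H \<le> k"
    proof -
      have "degree (aint q) \<le> k" using degree_aint[of q] q k by linarith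
      hence "degree G \<le> k" unfolding G_def N_def
        using degree_nev[of xh "Vp xh v" "s-1" k] degree_diff_le by blast
      thus ?thesis unfolding H_def using degree_diff_le by force
    qed
    ultimately show "degree H < card (xh ` {s-1..s-1+int k})" by simp
    fix x assume "x \<in> xh ` {s-1..s-1+int k}"
    then obtain j where j: "s-1 \<le> j" "j \<le> s-1+int k" "x = xh j" by auto
    define n where "n = nat (j - (s-1))"
    have "j = s - 1 + int n" "n \<le> k" using j unfolding n_def by auto
    thus "poly H x = 0" using const_nodes[where G=G and s=s and k=k and xh=xh, OF Gc] j unfolding H_def by simp
  qed
  hence "pderiv G = 0" unfolding H_def by (metis diff_eq_eq pderiv_add pderiv_pCons pderiv_0 add.right_neutral pCons_0_0)
  thus "q = pderiv N" unfolding G_def by (simp add: pderiv_diff pderiv_aint)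
qed

lemma eno_poly_eq:
  assumes sm: "strict_mono xh" and k: "k \<ge> 1"
  shows "eno_poly k xh v i = pderiv (nev xh (Vp xh v) (eno_stencil xh v i (k-1) - 1) k)"
  unfolding eno_poly_def Let_def by (rule eno_char[OF sm k])



definition om :: "(int\<Rightarrow>real) \<Rightarrow> int set \<Rightarrow> real poly" where
  "om xh J = (\<Prod>j\<in>J. [:- xh j, 1:])"

lemma degree_om: "finite J \<Longrightarrow> degree (om xh J) = card J"
  unfolding om_def by (subst degree_prod_eq_sum_degree) auto

lemma coeff_om: "finite J \<Longrightarrow> coeff (om xh J) (card J) = 1"
  using lead_coeff_prod[of "\<lambda>j. [:- xh j, 1:]" J] degree_om[of J xh] unfolding om_def by simp

lemma poly_om_root: "j \<in> J \<Longrightarrow> finite J \<Longrightarrow> poly (om xh J) (xh j) = 0"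
  unfolding om_def poly_prod by (rule prod_zero) auto

lemma deg_drop:
  fixes p :: "real poly"
  assumes "degree p \<le> Suc l" "coeff p (Suc l) = 0"
  shows "degree p \<le> l"
proof (rule ccontr)
  assume "\<not> degree p \<le> l"
  hence d: "degree p = Suc l" using assms(1) by linarith
  hence "lead_coeff p = 0" using assms(2) by simp
  hence "p = 0" by simp
  thus False using d by simp
qed

lemma diff_nev:
  assumes sm: "strict_mono xh" and V: "\<And>j. V j - V (j-1) = (xh j - xh (j-1)) * v j"
  shows "nev xh V b (Suc l) - nev xh V (b-1) (Suc l) =
    smult ((xh (b + int l + 1) - xh (b-1)) * dd xh v b (Suc l)) (om xh {b..b+int l})"
proof -
  define C where "C = (xh (b + int l + 1) - xh (b-1)) * dd xh v b (Suc l)"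
  define Q where "Q = nev xh V b (Suc l) - nev xh V (b-1) (Suc l) - smult C (om xh {b..b+int l})"
  have ne: "xh (b + int l + 1) - xh (b-1) \<noteq> 0"
    using strict_mono_less[OF sm, of "b-1" "b + int l + 1"] by simp
  have cd: "card {b..b+int l} = Suc l" by simp
  have "coeff (nev xh V b (Suc l)) (Suc l) - coeff (nev xh V (b-1) (Suc l)) (Suc l) = C"
    using nev_coeff[OF sm V, of b l] nev_coeff[OF sm V, of "b-1" l] ne
    by (simp add: C_def add.commute add.left_commute)
  hence c0: "coeff Q (Suc l) = 0"
    unfolding Q_def using coeff_om[of "{b..b+int l}" xh] cd by simp
  have d1: "degree Q \<le> Suc l"
  proof -
    have d2: "degree (smult C (om xh {b..b + int l})) \<le> Suc l"
      using degree_om[of "{b..b+int l}" xh] cd by (metis degree_smult_le finite_atLeastAtMost_int order.trans)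
    have d3: "degree (nev xh V b (Suc l) - nev xh V (b-1) (Suc l)) \<le> Suc l"
      using degree_nev[of xh V b "Suc l"] degree_nev[of xh V "b-1" "Suc l"] by (rule degree_diff_le)
    show ?thesis unfolding Q_def by (rule degree_diff_le[OF d3 d2])
  qed
  have "Q = 0"
  proof (rule roots_zero)
    show "finite (xh ` {b..b+int l})" by simp
    have "inj_on xh {b..b+int l}" using strict_mono_imp_inj_on[OF sm] by blast
    hence "card (xh ` {b..b+int l}) = card {b..b+int l}" by (rule card_image)
    thus "degree Q < card (xh ` {b..b+int l})" using deg_drop[OF d1 c0] cd by simp
    fix x assume "x \<in> xh ` {b..b+int l}"
    then obtain j where j: "b \<le> j" "j \<le> b + int l" "x = xh j" by auto
    have "poly (nev xh V b (Suc l)) (xh j) = V j" by (rule nev_interp[OF sm]) (use j in auto)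
    moreover have "poly (nev xh V (b-1) (Suc l)) (xh j) = V j" by (rule nev_interp[OF sm]) (use j in auto)
    ultimately show "poly Q x = 0" unfolding Q_def using j poly_om_root[of j "{b..b+int l}" xh]
      by (simp del: nev.simps)
  qed
  thus ?thesis unfolding Q_def C_def by (simp only: diff_eq_eq add_0_left)
qed

lemma deriv_om:
  assumes "i \<in> J" "finite J"
  shows "poly (pderiv (om xh J)) (xh i) = (\<Prod>j\<in>J-{i}. (xh i - xh j))"
proof -
  have "om xh J = [:- xh i, 1:] * om xh (J - {i})"
    unfolding om_def using assms by (simp add: prod.remove)
  hence "poly (pderiv (om xh J)) (xh i) = poly [:- xh i, 1:] (xh i) * poly (pderiv (om xh (J - {i}))) (xh i)
     + poly (om xh (J - {i})) (xh i) * poly (pderiv [:- xh i, 1:]) (xh i)"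
    by (simp only: pderiv_mult poly_add poly_mult)
  hence "poly (pderiv (om xh J)) (xh i) = poly (om xh (J - {i})) (xh i)" by (simp add: pderiv_pCons)
  thus ?thesis unfolding om_def poly_prod by simp
qed

definition alt :: "int \<Rightarrow> real" where "alt n = (if even n then 1 else -1)"

lemma alt_Suc: "alt (n + 1) = - alt n" unfolding alt_def by auto
lemma alt_sq: "alt n * alt n = 1" unfolding alt_def by auto

lemma prod_right_sign:
  assumes sm: "strict_mono xh"
  shows "alt (int n) * (\<Prod>j\<in>{i<..i+int n}. (xh i - xh j)) > 0"
proof (induction n)
  case 0 then show ?case by (simp add: alt_def)
next
  case (Suc n)
  have s: "{i<..i+int (Suc n)} = insert (i + int n + 1) {i<..i+int n}" by auto
  have neg: "xh i - xh (i + int n + 1) < 0" using strict_mono_less[OF sm, of i "i + int n + 1"] by simp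
  have "alt (int (Suc n)) * (\<Prod>j\<in>{i<..i+int (Suc n)}. (xh i - xh j))
      = (- (xh i - xh (i + int n + 1))) * (alt (int n) * (\<Prod>j\<in>{i<..i+int n}. (xh i - xh j)))"
    unfolding s using alt_Suc[of "int n"] by (simp add: algebra_simps)
  also have "\<dots> > 0" by (rule mult_pos_pos) (use Suc.IH neg in auto)
  finally show ?case .
qed

lemma om_sign:
  assumes sm: "strict_mono xh" and i: "b \<le> i" "i \<le> b + int l"
  shows "alt (b + int l - i) * (\<Prod>j\<in>{b..b+int l}-{i}. (xh i - xh j)) > 0"
proof -
  have split: "{b..b+int l}-{i} = {b..<i} \<union> {i<..i + int (nat (b + int l - i))}" using i by auto
  have "(\<Prod>j\<in>{b..b+int l}-{i}. (xh i - xh j)) =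
     (\<Prod>j\<in>{b..<i}. (xh i - xh j)) * (\<Prod>j\<in>{i<..i + int (nat (b + int l - i))}. (xh i - xh j))"
    unfolding split by (rule prod.union_disjoint) auto
  moreover have "(\<Prod>j\<in>{b..<i}. (xh i - xh j)) > 0"
    by (rule prod_pos) (use strict_mono_less[OF sm] in auto)
  moreover have "alt (int (nat (b + int l - i))) * (\<Prod>j\<in>{i<..i + int (nat (b + int l - i))}. (xh i - xh j)) > 0"
    by (rule prod_right_sign[OF sm])
  moreover have "int (nat (b + int l - i)) = b + int l - i" using i by simp
  ultimately show ?thesis
  proof -
    assume a1: "(\<Prod>j\<in>{b..b+int l}-{i}. (xh i - xh j)) =
     (\<Prod>j\<in>{b..<i}. (xh i - xh j)) * (\<Prod>j\<in>{i<..i + int (nat (b + int l - i))}. (xh i - xh j))"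
      and a2: "(\<Prod>j\<in>{b..<i}. (xh i - xh j)) > 0"
      and a3: "alt (int (nat (b + int l - i))) * (\<Prod>j\<in>{i<..i + int (nat (b + int l - i))}. (xh i - xh j)) > 0"
      and a4: "int (nat (b + int l - i)) = b + int l - i"
    from a3 a4 have a5: "alt (b + int l - i) * (\<Prod>j\<in>{i<..i + int (nat (b + int l - i))}. (xh i - xh j)) > 0" by simp
    show ?thesis unfolding a1 mult.left_commute[of "alt (b + int l - i)"] using a2 a5 by (rule mult_pos_pos)
  qed
qed



lemma stencil_bounds: "i - int n \<le> eno_stencil xh v i n \<and> eno_stencil xh v i n \<le> i"
  by (induction n) (auto simp: Let_def)

lemma combine:
  fixes x y c1 D :: real
  assumes "x = c1 * D" "c1 \<ge> 0" "\<bar>y\<bar> \<le> \<bar>x\<bar>"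
  shows "\<exists>c\<ge>0. x + y = c * D"
proof (cases "D = 0")
  case True then show ?thesis using assms by (intro exI[of _ 0]) auto
next
  case False
  have "\<bar>y / D\<bar> \<le> c1" using assms False by (simp add: abs_mult abs_divide field_simps)
  hence "c1 + y / D \<ge> 0" by linarith
  moreover have "x + y = (c1 + y/D) * D" using assms False by (simp add: field_simps)
  ultimately show ?thesis by blast
qed

lemma abs_alt: "\<bar>alt n * w\<bar> = \<bar>w\<bar>" unfolding alt_def by auto

lemma invariant:
  assumes sm: "strict_mono xh"
  shows "eno_stencil xh v i n \<le> eno_stencil xh v (i+1) n \<and>
    (\<forall>b. eno_stencil xh v i n \<le> b \<and> b < eno_stencil xh v (i+1) n \<longrightarrow>
       (\<exists>c\<ge>0. alt (b + int n - i) * dd xh v b (Suc n) = c * (v (i+1) - v i)))"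
proof (induction n)
  case 0
  have "dd xh v i (Suc 0) = (1 / (xh (i+1) - xh (i-1))) * (v (i+1) - v i)" by simp
  moreover have "1 / (xh (i+1) - xh (i-1)) \<ge> 0" using strict_mono_less[OF sm, of "i-1" "i+1"] by simp
  moreover have "alt (i + int 0 - i) = 1" by (simp add: alt_def)
  ultimately have "alt (i + int 0 - i) * dd xh v i (Suc 0) = (1 / (xh (i+1) - xh (i-1))) * (v (i+1) - v i)
     \<and> 1 / (xh (i+1) - xh (i-1)) \<ge> 0" by simp
  hence ex: "\<exists>c\<ge>0. alt (i + int 0 - i) * dd xh v i (Suc 0) = c * (v (i+1) - v i)" by blast
  have bi: "\<And>b. i \<le> b \<Longrightarrow> b < i + 1 \<Longrightarrow> b = i" by simp
  show ?case unfolding eno_stencil.simps(1)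
  proof (intro conjI allI impI)
    show "i \<le> i + 1" by simp
    fix b assume "i \<le> b \<and> b < i + 1"
    hence "b = i" using bi by blast
    thus "\<exists>c\<ge>0. alt (b + int 0 - i) * dd xh v b (Suc 0) = c * (v (i + 1) - v i)" using ex by simp
  qed
next
  case (Suc n)
  define a where "a = eno_stencil xh v i n"
  define c where "c = eno_stencil xh v (i+1) n"
  define D where "D = v (i+1) - v i"
  define w where "w b = dd xh v b (Suc n)" for b
  define X where "X b = alt (b + int n - i) * w b" for b
  have IH1: "a \<le> c" using Suc.IH unfolding a_def c_def by blast
  have IH2: "\<And>b. a \<le> b \<Longrightarrow> b < c \<Longrightarrow> \<exists>c\<ge>0. X b = c * D"
    using Suc.IH unfolding a_def c_def X_def w_def D_def by blast
  have Sa: "eno_stencil xh v i (Suc n) = (if \<bar>w (a-1)\<bar> < \<bar>w a\<bar> then a - 1 else a)"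
    by (simp add: Let_def a_def w_def)
  have Sc: "eno_stencil xh v (i+1) (Suc n) = (if \<bar>w (c-1)\<bar> < \<bar>w c\<bar> then c - 1 else c)"
    by (simp add: Let_def c_def w_def)
  have new: "alt (b + int (Suc n) - i) * dd xh v b (Suc (Suc n))
        = (X (b+1) + X b) / (xh (b + int (Suc n) + 1) - xh (b-1))" for b
  proof -
    have d: "dd xh v b (Suc (Suc n)) = (w (b+1) - w b) / (xh (b + int (Suc n) + 1) - xh (b-1))"
      unfolding w_def by simp
    have e1: "alt (b + 1 + int n - i) = alt (b + int (Suc n) - i)" by (simp add: algebra_simps)
    have e2: "alt (b + int n - i) = - alt (b + int (Suc n) - i)"
      using alt_Suc[of "b + int n - i"] by (simp add: algebra_simps)
    have "X (b+1) + X b = alt (b + int (Suc n) - i) * (w (b+1) - w b)"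
      unfolding X_def e1 e2 by (simp add: algebra_simps)
    thus ?thesis unfolding d by simp
  qed
  have den: "xh (b + int (Suc n) + 1) - xh (b-1) > 0" for b
  proof -
    have "b - 1 < b + int (Suc n) + 1" by simp
    hence "xh (b-1) < xh (b + int (Suc n) + 1)" using strict_mono_less[OF sm] by blast
    thus ?thesis by linarith
  qed
  have divpos: "\<exists>c\<ge>0. Y / d = c * D" if "\<exists>c\<ge>0. Y = c * D" "d > 0" for Y d
  proof -
    from that(1) obtain c0 where c0: "c0 \<ge> 0" "Y = c0 * D" by (elim exE conjE)
    have "c0 / d \<ge> 0" using c0(1) that(2) by simp
    moreover have "Y / d = (c0 / d) * D" using c0(2) by simp
    ultimately show ?thesis by (intro exI[of _ "c0 / d"] conjI)
  qed
  show ?case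
  proof (cases "a = c")
    case True
    hence "eno_stencil xh v i (Suc n) = eno_stencil xh v (i+1) (Suc n)" unfolding Sa Sc by simp
    then show ?thesis by (metis order.refl order.strict_trans2 less_irrefl)
  next
    case False
    hence ac: "a < c" using IH1 by simp
    define SA where "SA = eno_stencil xh v i (Suc n)"
    define SC where "SC = eno_stencil xh v (i+1) (Suc n)"
    have SA1: "SA = a - 1 \<Longrightarrow> \<bar>w (a-1)\<bar> < \<bar>w a\<bar>" "SA = a \<or> SA = a - 1"
      using Sa unfolding SA_def[symmetric] by (auto split: if_splits)
    have SC1: "SC = c \<Longrightarrow> \<bar>w c\<bar> \<le> \<bar>w (c-1)\<bar>" "SC = c \<or> SC = c - 1"
      using Sc unfolding SC_def[symmetric] by (auto split: if_splits)
    have m: "SA \<le> SC" using SA1(2) SC1(2) ac by auto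
    have "\<exists>cc\<ge>0. alt (b + int (Suc n) - i) * dd xh v b (Suc (Suc n)) = cc * D"
      if b: "SA \<le> b" "b < SC" for b
    proof -
      have "\<exists>cc\<ge>0. X (b+1) + X b = cc * D"
      proof -
        have "(a \<le> b \<and> b + 1 < c) \<or> (b = a - 1 \<and> SA = a - 1) \<or> (b = c - 1 \<and> SC = c \<and> a \<le> b)"
          using b SA1(2) SC1(2) ac by auto
        then consider "a \<le> b \<and> b + 1 < c" | "b = a - 1 \<and> SA = a - 1" | "b = c - 1 \<and> SC = c \<and> a \<le> b"
          by blast
        then show ?thesis
        proof cases
          case 1
          then obtain c1 c2 where "c1 \<ge> 0" "X (b+1) = c1 * D" "c2 \<ge> 0" "X b = c2 * D"
            using IH2[of b] IH2[of "b+1"] by auto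
          thus ?thesis by (intro exI[of _ "c1 + c2"]) (auto simp: algebra_simps)
        next
          case 2
          hence lt: "\<bar>w (a-1)\<bar> < \<bar>w a\<bar>" using SA1(1) by blast
          obtain c1 where "c1 \<ge> 0" "X a = c1 * D" using IH2[of a] ac by auto
          moreover have "\<bar>X (a-1)\<bar> \<le> \<bar>X a\<bar>" using lt unfolding X_def abs_alt by simp
          ultimately have "\<exists>cc\<ge>0. X a + X (a-1) = cc * D" using combine[of "X a" c1 D "X (a-1)"] by blast
          moreover have "b + 1 = a" "b = a - 1" using 2 by auto
          ultimately show ?thesis by (simp add: add.commute)
        next
          case 3
          hence le: "\<bar>w c\<bar> \<le> \<bar>w (c-1)\<bar>" using SC1(1) by blast
          obtain c1 where "c1 \<ge> 0" "X (c-1) = c1 * D" using IH2[of "c-1"] ac by auto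
          moreover have "\<bar>X c\<bar> \<le> \<bar>X (c-1)\<bar>" using le unfolding X_def abs_alt by simp
          ultimately have "\<exists>cc\<ge>0. X (c-1) + X c = cc * D" using combine[of "X (c-1)" c1 D "X c"] by blast
          moreover have "b + 1 = c" "b = c - 1" using 3 by auto
          ultimately show ?thesis by (simp add: add.commute)
        qed
      qed
      thus ?thesis unfolding new by (rule divpos[OF _ den])
    qed
    thus ?thesis using m unfolding D_def SA_def SC_def by blast
  qed
qed



lemma main_aux:
  fixes k :: nat and xh :: "int \<Rightarrow> real" and v :: "int \<Rightarrow> real" and i :: int
  assumes k: "k \<ge> 1" and sm: "strict_mono xh"
  shows "\<exists>e\<ge>0. eno_vplus k xh v i - eno_vminus k xh v i = e * (v (i+1) - v i)"
proof -
  obtain l where l: "k = Suc l" using k by (cases k) auto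
  define V where "V = Vp xh v"
  have Vd: "\<And>j. V j - V (j-1) = (xh j - xh (j-1)) * v j" unfolding V_def by (rule Vp_diff)
  define Dl where "Dl = v (i+1) - v i"
  define a where "a = eno_stencil xh v i l"
  define c where "c = eno_stencil xh v (i+1) l"
  define F where "F b = poly (pderiv (nev xh V (b-1) (Suc l))) (xh i)" for b
  have vm: "eno_vminus k xh v i = F a"
    unfolding eno_vminus_def F_def a_def V_def using eno_poly_eq[OF sm k, of v i] l by simp
  have vp: "eno_vplus k xh v i = F c"
    unfolding eno_vplus_def F_def c_def V_def using eno_poly_eq[OF sm k, of v "i+1"] l by simp
  have inv: "a \<le> c" "\<And>b. a \<le> b \<Longrightarrow> b < c \<Longrightarrow> \<exists>cc\<ge>0. alt (b + int l - i) * dd xh v b (Suc l) = cc * Dl"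
    using invariant[OF sm, of v i l] unfolding a_def c_def Dl_def by blast+
  have ba: "i - int l \<le> a" using stencil_bounds[of i l xh v] unfolding a_def by simp
  have bc: "c \<le> i + 1" using stencil_bounds[of "i+1" l xh v] unfolding c_def by simp
  have step: "\<exists>e\<ge>0. F (b+1) - F b = e * Dl" if b: "a \<le> b" "b < c" for b
  proof -
    define K where "K = (xh (b + int l + 1) - xh (b-1)) * dd xh v b (Suc l)"
    define P where "P = (\<Prod>j\<in>{b..b+int l}-{i}. (xh i - xh j))"
    have iJ: "i \<in> {b..b+int l}" using b ba bc by auto
    have "F (b+1) - F b = poly (pderiv (nev xh V b (Suc l) - nev xh V (b-1) (Suc l))) (xh i)"
      unfolding F_def by (simp add: pderiv_diff del: nev.simps)
    also have "\<dots> = K * P"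
      unfolding diff_nev[OF sm Vd] K_def P_def using deriv_om[OF iJ, of xh] by (simp add: pderiv_smult)
    finally have FP: "F (b+1) - F b = K * P" .
    obtain cc where cc: "cc \<ge> 0" "alt (b + int l - i) * dd xh v b (Suc l) = cc * Dl" using inv(2)[OF b] by blast
    have sP: "alt (b + int l - i) * P > 0" unfolding P_def using om_sign[OF sm, of b i l] iJ by auto
    have pos: "xh (b + int l + 1) - xh (b-1) > 0"
    proof -
      have "b - 1 < b + int l + 1" by simp
      hence "xh (b-1) < xh (b + int l + 1)" using strict_mono_less[OF sm] by blast
      thus ?thesis by linarith
    qed
    have "K * P = (xh (b + int l + 1) - xh (b-1)) * (alt (b + int l - i) * dd xh v b (Suc l)) * (alt (b + int l - i) * P)"
      unfolding K_def using alt_sq[of "b + int l - i"] by (simp add: algebra_simps del: dd.simps)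
    also have "\<dots> = ((xh (b + int l + 1) - xh (b-1)) * cc * (alt (b + int l - i) * P)) * Dl"
      unfolding cc(2) by (simp add: algebra_simps del: dd.simps)
    finally have "F (b+1) - F b = ((xh (b + int l + 1) - xh (b-1)) * cc * (alt (b + int l - i) * P)) * Dl"
      using FP by (simp del: dd.simps)
    moreover have "(xh (b + int l + 1) - xh (b-1)) * cc * (alt (b + int l - i) * P) \<ge> 0"
      using pos cc(1) sP by simp
    ultimately show ?thesis by blast
  qed
  have sum: "\<exists>e\<ge>0. F (a + int m) - F a = e * Dl" if "a + int m \<le> c" for m
    using that
  proof (induction m)
    case 0
    then show ?case by (intro exI[of _ 0]) simp
  next
    case (Suc m)
    then obtain e1 where e1: "e1 \<ge> 0" "F (a + int m) - F a = e1 * Dl" by auto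
    obtain e2 where e2: "e2 \<ge> 0" "F (a + int m + 1) - F (a + int m) = e2 * Dl"
      using step[of "a + int m"] Suc.prems by auto
    have "F (a + int (Suc m)) - F a = (e1 + e2) * Dl"
      using e1 e2 by (simp add: algebra_simps)
    thus ?case using e1 e2 by (intro exI[of _ "e1 + e2"]) simp
  qed
  have "c = a + int (nat (c - a))" using inv(1) by simp
  then obtain e where "e \<ge> 0" "F c - F a = e * Dl" using sum[of "nat (c - a)"] by auto
  thus ?thesis unfolding vm vp Dl_def by blast
qed

theorem mainTheorem1:
  fixes k :: nat and xh :: "int \<Rightarrow> real" and v :: "int \<Rightarrow> real" and i :: int
  assumes "k \<ge> 1"
    and "strict_mono xh"
    and "filterlim xh at_top at_top"
    and "filterlim xh at_bot at_bot"
  shows "(v (i + 1) - v i > 0 \<longrightarrow> eno_vplus k xh v i - eno_vminus k xh v i \<ge> 0) \<and>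
         (v (i + 1) - v i < 0 \<longrightarrow> eno_vplus k xh v i - eno_vminus k xh v i \<le> 0) \<and>
         (v (i + 1) - v i = 0 \<longrightarrow> eno_vplus k xh v i - eno_vminus k xh v i = 0)"
proof -
  obtain e where e: "e \<ge> 0" "eno_vplus k xh v i - eno_vminus k xh v i = e * (v (i+1) - v i)"
    using main_aux[OF assms(1,2), of v i] by blast
  show ?thesis unfolding e(2) using e(1)
    by (auto intro: mult_nonneg_nonneg mult_nonneg_nonpos)
qed


end
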